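(* There is an absolute constant $C$ such that for every $\epsilon\in(0,1)$ and every $(n,d,\lambda)$-graph $G$ with $\lambda\le(1-\epsilon)d$ and with no cycle of length 4 (and $d\ge2$), $m(G,2)\le C\frac{n\log d}{\epsilon^2d^2}$.
   Context: Bootstrap percolation with threshold $r\ge 2$ on a graph $G=(V,E)$: given a set $A_0\subseteq V$ of seeds, define for $i\ge1$ $A_i=A_{i-1}\cup\{v:|N(v)\cap A_{i-1}|\ge r\}$, where $N(v)$ is the set of neighbors of $v$, and $\langle A_0\rangle=\bigcup_i A_i$. The set $A_0$ is contagious if $\langle A_0\rangle=V$; $m(G,r)$ denotes the minimum cardinality of a contagious set. An $(n,d,\lambda)$-graph is a $d$-regular graph on $n$ vertices whose adjacency eigenvalues $d=\lambda_1\ge\lambda_2\ge\dots\ge\lambda_n$ satisfy $\max\{|\lambda_2|,|\lambda_n|\}\le\lambda$. Logarithms are base 2. *)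

theory Defs
  imports "HOL-Analysis.Analysis" "Jordan_Normal_Form.Char_Poly"
    "HOL-Computational_Algebra.Polynomial"
begin

definition simple_graph :: "nat \<Rightarrow> (nat \<Rightarrow> nat \<Rightarrow> bool) \<Rightarrow> bool" where
  "simple_graph n E \<longleftrightarrow>
     (\<forall>u v. E u v \<longrightarrow> u < n \<and> v < n) \<and> (\<forall>u v. E u v \<longrightarrow> E v u) \<and> (\<forall>u. \<not> E u u)"

definition nbrs :: "nat \<Rightarrow> (nat \<Rightarrow> nat \<Rightarrow> bool) \<Rightarrow> nat \<Rightarrow> nat set" where
  "nbrs n E v = {u \<in> {0..<n}. E v u}"

definition regular :: "nat \<Rightarrow> (nat \<Rightarrow> nat \<Rightarrow> bool) \<Rightarrow> nat \<Rightarrow> bool" where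
  "regular n E d \<longleftrightarrow> (\<forall>v<n. card (nbrs n E v) = d)"

definition adj_mat :: "nat \<Rightarrow> (nat \<Rightarrow> nat \<Rightarrow> bool) \<Rightarrow> real mat" where
  "adj_mat n E = mat n n (\<lambda>(i, j). if E i j then 1 else 0)"

text \<open>Adjacency eigenvalues with multiplicity: the roots of the characteristic polynomial
  (all real, since the adjacency matrix is real symmetric).\<close>
definition adj_spectrum :: "nat \<Rightarrow> (nat \<Rightarrow> nat \<Rightarrow> bool) \<Rightarrow> real multiset" where
  "adj_spectrum n E = proots (char_poly (adj_mat n E))"

definition ndl_graph :: "nat \<Rightarrow> nat \<Rightarrow> real \<Rightarrow> (nat \<Rightarrow> nat \<Rightarrow> bool) \<Rightarrow> bool" where
  "ndl_graph n d lam E \<longleftrightarrow> simple_graph n E \<and> regular n E d \<and>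
     real d \<in># adj_spectrum n E \<and>
     (\<forall>\<mu> \<in># adj_spectrum n E. \<mu> \<le> real d) \<and>
     (\<forall>\<mu> \<in># adj_spectrum n E - {# real d #}. \<bar>\<mu>\<bar> \<le> lam)"

definition C4_free :: "(nat \<Rightarrow> nat \<Rightarrow> bool) \<Rightarrow> bool" where
  "C4_free E \<longleftrightarrow> \<not> (\<exists>a b c e. distinct [a, b, c, e] \<and> E a b \<and> E b c \<and> E c e \<and> E e a)"

definition boot_step :: "nat \<Rightarrow> (nat \<Rightarrow> nat \<Rightarrow> bool) \<Rightarrow> nat \<Rightarrow> nat set \<Rightarrow> nat set" where
  "boot_step n E r A = A \<union> {v \<in> {0..<n}. card (nbrs n E v \<inter> A) \<ge> r}"

definition boot_closure :: "nat \<Rightarrow> (nat \<Rightarrow> nat \<Rightarrow> bool) \<Rightarrow> nat \<Rightarrow> nat set \<Rightarrow> nat set" where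
  "boot_closure n E r A0 = (\<Union>i. (boot_step n E r ^^ i) A0)"

definition contagious :: "nat \<Rightarrow> (nat \<Rightarrow> nat \<Rightarrow> bool) \<Rightarrow> nat \<Rightarrow> nat set \<Rightarrow> bool" where
  "contagious n E r A0 \<longleftrightarrow> A0 \<subseteq> {0..<n} \<and> boot_closure n E r A0 = {0..<n}"

definition min_contagious :: "nat \<Rightarrow> (nat \<Rightarrow> nat \<Rightarrow> bool) \<Rightarrow> nat \<Rightarrow> nat" where
  "min_contagious n E r = (LEAST k. \<exists>A. contagious n E r A \<and> card A = k)"

end

theory Submission
  imports Defs
begin

definition closedB :: "nat \<Rightarrow> (nat \<Rightarrow> nat \<Rightarrow> bool) \<Rightarrow> nat set \<Rightarrow> bool" where
 "closedB n E X \<longleftrightarrow> (\<forall>v<n. \<forall>a b. a \<noteq> b \<and> a \<in> X \<and> b \<in> X \<and> E v a \<and> E v b \<longrightarrow> v \<in> X)"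

lemma card_ge2_obtain:
  assumes "2 \<le> card A" obtains a b where "a\<in>A" "b\<in>A" "a\<noteq>b"
proof -
  have fin: "finite A" using assms card.infinite by fastforce
  have "\<not> card A \<le> Suc 0" using assms by simp
  then have "\<not> (\<forall>a\<in>A. \<forall>b\<in>A. a = b)" using card_le_Suc0_iff_eq[OF fin] by blast
  then show ?thesis using that by blast
qed

lemma boot_step_sup: "A \<subseteq> boot_step n E r A"
  unfolding boot_step_def by auto

lemma boot_iter_mono: "i \<le> j \<Longrightarrow> (boot_step n E r ^^ i) S \<subseteq> (boot_step n E r ^^ j) S"
proof (induction j)
  case 0 then show ?case by simp
next
  case (Suc j)
  show ?case
  proof (cases "i \<le> j")
    case True
    then have "(boot_step n E r ^^ i) S \<subseteq> (boot_step n E r ^^ j) S" by (rule Suc.IH)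
    also have "\<dots> \<subseteq> boot_step n E r ((boot_step n E r ^^ j) S)" by (rule boot_step_sup)
    finally show ?thesis by simp
  next
    case False then have "i = Suc j" using Suc.prems by simp
    then show ?thesis by simp
  qed
qed

lemma bc_sub: "S \<subseteq> boot_closure n E r S"
  unfolding boot_closure_def by (metis UN_upper UNIV_I funpow_0)

lemma bc_range: assumes "S \<subseteq> {0..<n}" shows "boot_closure n E r S \<subseteq> {0..<n}"
proof -
  have "(boot_step n E r ^^ k) S \<subseteq> {0..<n}" for k
    by (induction k) (use assms in \<open>auto simp: boot_step_def\<close>)
  then show ?thesis unfolding boot_closure_def by auto
qed

lemma bc_closed: assumes sg: "simple_graph n E" shows "closedB n E (boot_closure n E 2 S)"
  unfolding closedB_def
proof (intro allI impI)
  fix v a b assume v: "v < n" and h: "a \<noteq> b \<and> a \<in> boot_closure n E 2 S \<and> b \<in> boot_closure n E 2 S \<and> E v a \<and> E v b"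
  obtain i where i: "a \<in> (boot_step n E 2 ^^ i) S" using h unfolding boot_closure_def by auto
  obtain j where j: "b \<in> (boot_step n E 2 ^^ j) S" using h unfolding boot_closure_def by auto
  let ?k = "max i j"
  have a: "a \<in> (boot_step n E 2 ^^ ?k) S" using i boot_iter_mono[of i ?k n E 2 S] by auto
  have b: "b \<in> (boot_step n E 2 ^^ ?k) S" using j boot_iter_mono[of j ?k n E 2 S] by auto
  have rng: "\<And>x y. E x y \<Longrightarrow> x < n \<and> y < n" using sg unfolding simple_graph_def by blast
  have an: "a < n" "b < n" using h rng by blast+
  have "{a, b} \<subseteq> nbrs n E v \<inter> (boot_step n E 2 ^^ ?k) S"
    using a b an h unfolding nbrs_def by auto
  then have "card {a,b} \<le> card (nbrs n E v \<inter> (boot_step n E 2 ^^ ?k) S)"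
    by (intro card_mono) (auto simp: nbrs_def)
  then have "2 \<le> card (nbrs n E v \<inter> (boot_step n E 2 ^^ ?k) S)" using h by simp
  then have "v \<in> (boot_step n E 2 ^^ Suc ?k) S" using v by (simp add: boot_step_def)
  then show "v \<in> boot_closure n E 2 S" unfolding boot_closure_def by blast
qed

lemma bc_min: assumes "closedB n E X" "S \<subseteq> X" shows "boot_closure n E 2 S \<subseteq> X"
proof -
  have "(boot_step n E 2 ^^ k) S \<subseteq> X" for k
  proof (induction k)
    case 0 then show ?case using assms by simp
  next
    case (Suc k)
    show ?case
    proof
      fix v assume "v \<in> (boot_step n E 2 ^^ Suc k) S"
      then have "v \<in> (boot_step n E 2 ^^ k) S \<or> (v < n \<and> 2 \<le> card (nbrs n E v \<inter> (boot_step n E 2 ^^ k) S))"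
        by (auto simp: boot_step_def)
      then show "v \<in> X"
      proof
        assume "v < n \<and> 2 \<le> card (nbrs n E v \<inter> (boot_step n E 2 ^^ k) S)"
        then obtain a b where "a \<in> nbrs n E v \<inter> (boot_step n E 2 ^^ k) S" "b \<in> nbrs n E v \<inter> (boot_step n E 2 ^^ k) S" "a \<noteq> b" "v < n"
          by (metis card_ge2_obtain)
        then have "a \<in> X" "b \<in> X" "E v a" "E v b" "a \<noteq> b" "v < n" using Suc unfolding nbrs_def by auto
        then show ?thesis using assms(1) unfolding closedB_def by blast
      qed (use Suc in auto)
    qed
  qed
  then show ?thesis unfolding boot_closure_def by auto
qed

lemma nbrs_sub: "nbrs n E v \<subseteq> {0..<n}" and nbrs_fin: "finite (nbrs n E v)"
  unfolding nbrs_def by auto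

lemma nbrs_inter: "Y \<subseteq> {0..<n} \<Longrightarrow> nbrs n E x \<inter> Y = {y\<in>Y. E x y}"
  unfolding nbrs_def by auto

lemma card_nbrs_inter_sum:
  assumes "Y \<subseteq> {0..<n}" shows "card (nbrs n E x \<inter> Y) = (\<Sum>y\<in>Y. if E x y then 1 else 0)"
proof -
  have fY: "finite Y" using assms finite_subset by blast
  have "card (nbrs n E x \<inter> Y) = card {y\<in>Y. E x y}" using nbrs_inter[OF assms] by simp
  also have "\<dots> = (\<Sum>y\<in>Y. if E x y then 1 else 0)" using fY by (simp add: sum.inter_filter[symmetric])
  finally show ?thesis .
qed

lemma double_count:
  assumes sg: "simple_graph n E" and X: "X \<subseteq> {0..<n}" and Y: "Y \<subseteq> {0..<n}"
  shows "(\<Sum>x\<in>X. card (nbrs n E x \<inter> Y)) = (\<Sum>y\<in>Y. card (nbrs n E y \<inter> X))"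
proof -
  have sym: "E x y = E y x" for x y using sg unfolding simple_graph_def by blast
  have "(\<Sum>x\<in>X. card (nbrs n E x \<inter> Y)) = (\<Sum>x\<in>X. \<Sum>y\<in>Y. if E x y then 1 else 0)"
    using card_nbrs_inter_sum[OF Y] by simp
  also have "\<dots> = (\<Sum>y\<in>Y. \<Sum>x\<in>X. if E x y then 1 else 0)" by (rule sum.swap)
  also have "\<dots> = (\<Sum>y\<in>Y. \<Sum>x\<in>X. if E y x then 1 else 0)" using sym by simp
  also have "\<dots> = (\<Sum>y\<in>Y. card (nbrs n E y \<inter> X))"
    using card_nbrs_inter_sum[OF X] by simp
  finally show ?thesis .
qed

lemma C4_count:
  assumes sg: "simple_graph n E" and reg: "regular n E d" and c4: "C4_free E" and n: "0 < n"
  shows "d * (d - 1) + 1 \<le> n"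
proof -
  have sym: "E x y \<Longrightarrow> E y x" for x y using sg unfolding simple_graph_def by blast
  have irr: "\<not> E x x" for x using sg unfolding simple_graph_def by blast
  have rng: "E x y \<Longrightarrow> x < n \<and> y < n" for x y using sg unfolding simple_graph_def by blast
  define F where "F = Sigma (nbrs n E 0) (\<lambda>w. nbrs n E w - {0})"
  have cw: "card (nbrs n E w - {0}) = d - 1" if "w \<in> nbrs n E 0" for w
  proof -
    have "0 \<in> nbrs n E w" using that sym n unfolding nbrs_def by auto
    moreover have "w < n" using that unfolding nbrs_def by auto
    ultimately show ?thesis using reg nbrs_fin unfolding regular_def by (simp add: card_Diff_singleton)
  qed
  have "card F = (\<Sum>w\<in>nbrs n E 0. card (nbrs n E w - {0}))"
    unfolding F_def by (rule card_SigmaI) (auto simp: nbrs_fin)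
  also have "\<dots> = (\<Sum>w\<in>nbrs n E 0. d - 1)" using cw by simp
  also have "\<dots> = d * (d - 1)" using reg n unfolding regular_def by simp
  finally have cF: "card F = d * (d - 1)" .
  have inj: "inj_on snd F"
  proof (rule inj_onI)
    fix p q assume p: "p \<in> F" and q: "q \<in> F" and e: "snd p = snd q"
    obtain w1 x where pw: "p = (w1, x)" by (cases p)
    obtain w2 y where qw: "q = (w2, y)" by (cases q)
    have xy: "x = y" using e pw qw by simp
    show "p = q"
    proof (rule ccontr)
      assume "p \<noteq> q"
      then have ne: "w1 \<noteq> w2" using pw qw xy by simp
      have h: "E 0 w1" "E 0 w2" "E w1 x" "E w2 x" "x \<noteq> 0"
        using p q pw qw xy unfolding F_def nbrs_def by auto
      have "w1 \<noteq> 0" "w2 \<noteq> 0" "w1 \<noteq> x" "w2 \<noteq> x" using h irr by metis+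
      then have "distinct [0, w1, x, w2]" using h ne by auto
      moreover have "E 0 w1 \<and> E w1 x \<and> E x w2 \<and> E w2 0" using h sym by blast
      ultimately show False using c4 unfolding C4_free_def by blast
    qed
  qed
  have "snd ` F \<subseteq> {0..<n} - {0}" unfolding F_def nbrs_def by auto
  then have "card (snd ` F) \<le> card ({0..<n} - {0::nat})" by (intro card_mono) auto
  also have "\<dots> = n - 1" using n by simp
  finally have "card F \<le> n - 1" using card_image[OF inj] by simp
  then show ?thesis using cF n by simp
qed

definition adjc :: "(nat \<Rightarrow> nat \<Rightarrow> bool) \<Rightarrow> nat \<Rightarrow> nat \<Rightarrow> real" where
  "adjc E i j = (if E i j then 1 else 0)"

definition spec_ok :: "nat \<Rightarrow> (nat \<Rightarrow> nat \<Rightarrow> bool) \<Rightarrow> real \<Rightarrow> bool" where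
  "spec_ok n E lam \<longleftrightarrow> (\<forall>x::nat\<Rightarrow>real. (\<Sum>i\<in>{0..<n}. x i) = 0 \<longrightarrow>
      (\<Sum>i\<in>{0..<n}. \<Sum>j\<in>{0..<n}. adjc E i j * x i * x j) \<le> lam * (\<Sum>i\<in>{0..<n}. (x i)^2))"

lemma adj_row: "(\<Sum>j\<in>{0..<n}. adjc E i j * f j) = (\<Sum>j\<in>nbrs n E i. f j)"
proof -
  have "(\<Sum>j\<in>{0..<n}. adjc E i j * f j) = (\<Sum>j\<in>{0..<n}. if E i j then f j else 0)"
    by (rule sum.cong) (auto simp: adjc_def)
  also have "\<dots> = (\<Sum>j\<in>{j\<in>{0..<n}. E i j}. f j)" by (rule sum.inter_filter[symmetric]) simp
  finally show ?thesis by (simp add: nbrs_def)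
qed

lemma sum_ind: assumes "A \<subseteq> B" "finite B"
  shows "(\<Sum>i\<in>B. if i \<in> A then g i else 0) = (\<Sum>i\<in>A. g i)"
proof -
  have "(\<Sum>i\<in>B. if i \<in> A then g i else 0) = (\<Sum>i\<in>{i\<in>B. i \<in> A}. g i)"
    using assms by (simp add: sum.inter_filter)
  also have "{i\<in>B. i \<in> A} = A" using assms by auto
  finally show ?thesis .
qed

lemma sum_ind_card: assumes "finite B"
  shows "(\<Sum>j\<in>B. if j \<in> A then (1::real) else 0) = real (card (B \<inter> A))"
proof -
  have "(\<Sum>j\<in>B. if j \<in> A then (1::real) else 0) = (\<Sum>j\<in>{j\<in>B. j \<in> A}. 1)"
    by (rule sum.inter_filter[symmetric]) (fact assms)
  also have "{j\<in>B. j \<in> A} = B \<inter> A" by auto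
  finally show ?thesis by simp
qed

lemma expansion:
  assumes sg: "simple_graph n E" and reg: "regular n E d" and sp: "spec_ok n E lam"
    and A: "A \<subseteq> {0..<n}" and n: "0 < n"
  shows "(real d - lam) * card A * (real n - card A) \<le> real n * (\<Sum>v\<in>A. card (nbrs n E v - A))"
proof -
  define s where "s = real (card A)"
  define c where "c = s / real n"
  define x where "x = (\<lambda>i. (if i \<in> A then (1::real) else 0) - c)"
  define e where "e = real (\<Sum>v\<in>A. card (nbrs n E v - A))"
  define N where "N = (\<lambda>i. real (card (nbrs n E i \<inter> A)))"
  have fV: "finite {0..<n}" by simp
  have fA: "finite A" using A finite_subset by blast
  have cn: "c * real n = s" using n unfolding c_def by simp
  have deg: "\<And>i. i < n \<Longrightarrow> real (card (nbrs n E i)) = real d" using reg unfolding regular_def by simp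
  have sumchi: "(\<Sum>i\<in>{0..<n}. if i \<in> A then (1::real) else 0) = s"
    using sum_ind_card[OF fV, of A] A unfolding s_def by (simp add: Int_absorb1)
  have sx: "(\<Sum>i\<in>{0..<n}. x i) = 0" unfolding x_def using sumchi cn by (simp add: sum_subtractf) (metis mult.commute)
  have row: "(\<Sum>j\<in>{0..<n}. adjc E i j * x j) = N i - c * d" if "i<n" for i
  proof -
    have "(\<Sum>j\<in>{0..<n}. adjc E i j * x j) = (\<Sum>j\<in>nbrs n E i. x j)" by (rule adj_row)
    also have "\<dots> = (\<Sum>j\<in>nbrs n E i. if j\<in>A then 1 else 0) - c * real (card (nbrs n E i))"
      unfolding x_def by (simp add: sum_subtractf)
    also have "\<dots> = N i - c * d" using sum_ind_card[OF nbrs_fin] deg[OF that] unfolding N_def by simp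
    finally show ?thesis .
  qed
  have lhs1: "(\<Sum>i\<in>{0..<n}. \<Sum>j\<in>{0..<n}. adjc E i j * x i * x j) = (\<Sum>i\<in>{0..<n}. x i * (N i - c * d))"
  proof (rule sum.cong[OF refl])
    fix i assume i: "i \<in> {0..<n}"
    have "(\<Sum>j\<in>{0..<n}. adjc E i j * x i * x j) = x i * (\<Sum>j\<in>{0..<n}. adjc E i j * x j)"
      by (simp add: sum_distrib_left algebra_simps)
    then show "(\<Sum>j\<in>{0..<n}. adjc E i j * x i * x j) = x i * (N i - c * d)" using row i by simp
  qed
  have "(\<Sum>i\<in>{0..<n}. x i * (N i - c * d)) = (\<Sum>i\<in>{0..<n}. x i * N i) - c * d * (\<Sum>i\<in>{0..<n}. x i)"
    by (simp add: sum_subtractf sum_distrib_left algebra_simps)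
  also have "\<dots> = (\<Sum>i\<in>{0..<n}. x i * N i)" using sx by simp
  also have "\<dots> = (\<Sum>i\<in>{0..<n}. (if i \<in> A then N i else 0) - c * N i)"
    by (rule sum.cong[OF refl]) (auto simp: x_def algebra_simps)
  also have "\<dots> = (\<Sum>i\<in>{0..<n}. if i \<in> A then N i else 0) - c * (\<Sum>i\<in>{0..<n}. N i)"
    by (simp add: sum_subtractf sum_distrib_left)
  finally have lhs2: "(\<Sum>i\<in>{0..<n}. \<Sum>j\<in>{0..<n}. adjc E i j * x i * x j)
      = (\<Sum>i\<in>{0..<n}. if i \<in> A then N i else 0) - c * (\<Sum>i\<in>{0..<n}. N i)" using lhs1 by simp
  have NA: "(\<Sum>i\<in>{0..<n}. if i \<in> A then N i else 0) = s * d - e"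
  proof -
    have "(\<Sum>i\<in>{0..<n}. if i \<in> A then N i else 0) = (\<Sum>i\<in>A. N i)" by (rule sum_ind[OF A fV])
    also have "\<dots> = (\<Sum>i\<in>A. real d - real (card (nbrs n E i - A)))"
    proof (rule sum.cong[OF refl])
      fix i assume "i \<in> A"
      then have "i < n" using A by auto
      have "card (nbrs n E i \<inter> A) + card (nbrs n E i - A) = card (nbrs n E i)"
        using card_Int_Diff[OF nbrs_fin] by metis
      then show "N i = real d - real (card (nbrs n E i - A))" using deg[OF \<open>i<n\<close>] unfolding N_def by linarith
    qed
    also have "\<dots> = s * d - e" unfolding s_def e_def by (simp add: sum_subtractf)
    finally show ?thesis .
  qed
  have NV: "(\<Sum>i\<in>{0..<n}. N i) = s * d"
  proof -
    have "(\<Sum>i\<in>{0..<n}. card (nbrs n E i \<inter> A)) = (\<Sum>a\<in>A. card (nbrs n E a \<inter> {0..<n}))"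
      by (rule double_count[OF sg _ A]) simp
    also have "\<dots> = (\<Sum>a\<in>A. d)"
    proof (rule sum.cong[OF refl])
      fix a assume "a \<in> A" then have "a < n" using A by auto
      then show "card (nbrs n E a \<inter> {0..<n}) = d" using reg nbrs_sub[of n E a] unfolding regular_def
        by (simp add: Int_absorb2)
    qed
    finally have "(\<Sum>i\<in>{0..<n}. card (nbrs n E i \<inter> A)) = card A * d" by simp
    then have "real (\<Sum>i\<in>{0..<n}. card (nbrs n E i \<inter> A)) = s * d" unfolding s_def by simp
    then show ?thesis unfolding N_def by simp
  qed
  have sq: "(\<Sum>i\<in>{0..<n}. (x i)^2) = s - c * s"
  proof -
    have h1: "(\<Sum>i\<in>{0..<n}. (x i)^2) = (\<Sum>i\<in>{0..<n}. c^2 + (if i \<in> A then 1 - 2 * c else 0))"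
      by (rule sum.cong[OF refl]) (auto simp: x_def power2_eq_square algebra_simps)
    have h2: "(\<Sum>i\<in>{0..<n}. c^2 + (if i \<in> A then 1 - 2 * c else 0)) = (\<Sum>i\<in>{0..<n}. c^2) + (\<Sum>i\<in>{0..<n}. (if i \<in> A then 1 - 2 * c else 0))"
      by (rule sum.distrib)
    have h3: "(\<Sum>i\<in>{0..<n}. (if i \<in> A then 1 - 2 * c else 0)) = (1 - 2*c) * (\<Sum>i\<in>{0..<n}. if i \<in> A then (1::real) else 0)"
      unfolding sum_distrib_left by (rule sum.cong[OF refl]) simp
    have h4: "(\<Sum>i\<in>{0..<n}. c^2) = real n * c^2" by simp
    have "(\<Sum>i\<in>{0..<n}. (x i)^2) = real n * c^2 + (1 - 2*c) * s" using h1 h2 h3 h4 sumchi by simp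
    also have "\<dots> = s - c * s" using cn by (simp add: power2_eq_square algebra_simps)
    finally show ?thesis .
  qed
  have I: "s * d - e - c * (s * d) \<le> lam * (s - c * s)"
  proof -
    have "(\<Sum>i\<in>{0..<n}. \<Sum>j\<in>{0..<n}. adjc E i j * x i * x j) \<le> lam * (\<Sum>i\<in>{0..<n}. (x i)^2)"
      using sp sx unfolding spec_ok_def by blast
    then show ?thesis unfolding lhs2 NA NV sq .
  qed
  have "real n * (s * d - e - c * (s * d)) \<le> real n * (lam * (s - c * s))"
    using I by (intro mult_left_mono) auto
  then have "real n * s * d - real n * e - (c * real n) * s * d \<le> lam * (real n * s - (c * real n) * s)"
    by (simp add: algebra_simps)
  then have "real n * s * d - real n * e - s * s * d \<le> lam * (real n * s - s * s)" using cn by simp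
  then show ?thesis unfolding s_def[symmetric] e_def[symmetric] by (simp add: algebra_simps)
qed

lemma closed_le1:
  assumes cl: "closedB n E X" and w: "w < n" "w \<notin> X"
  shows "card (nbrs n E w \<inter> X) \<le> 1"
proof (rule ccontr)
  assume "\<not> card (nbrs n E w \<inter> X) \<le> 1"
  then have "2 \<le> card (nbrs n E w \<inter> X)" by simp
  then obtain a b where "a \<in> nbrs n E w \<inter> X" "b \<in> nbrs n E w \<inter> X" "a \<noteq> b" by (rule card_ge2_obtain)
  then have "a \<in> X" "b \<in> X" "E w a" "E w b" "a \<noteq> b" unfolding nbrs_def by auto
  then have "w \<in> X" using cl w(1) unfolding closedB_def by blast
  then show False using w by simp
qed

definition bdry :: "nat \<Rightarrow> (nat \<Rightarrow> nat \<Rightarrow> bool) \<Rightarrow> nat set \<Rightarrow> nat set" where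
  "bdry n E X = {w \<in> {0..<n} - X. nbrs n E w \<inter> X \<noteq> {}}"

lemma bdry_one:
  assumes cl: "closedB n E X" and w: "w \<in> bdry n E X"
  shows "card (nbrs n E w \<inter> X) = 1"
proof -
  have "w < n" "w \<notin> X" "nbrs n E w \<inter> X \<noteq> {}" using w unfolding bdry_def by auto
  moreover have "finite (nbrs n E w \<inter> X)" using nbrs_fin by blast
  ultimately have "card (nbrs n E w \<inter> X) \<noteq> 0" "card (nbrs n E w \<inter> X) \<le> 1"
    using closed_le1[OF cl] by auto
  then show ?thesis by linarith
qed

lemma closed_edge:
  assumes sg: "simple_graph n E" and cl: "closedB n E X" and X: "X \<subseteq> {0..<n}"
  shows "(\<Sum>v\<in>X. card (nbrs n E v - X)) = card (bdry n E X)"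
proof -
  have "(\<Sum>v\<in>X. card (nbrs n E v - X)) = (\<Sum>v\<in>X. card (nbrs n E v \<inter> ({0..<n} - X)))"
    proof (rule sum.cong[OF refl])
    fix v assume "v \<in> X"
    have "nbrs n E v - X = nbrs n E v \<inter> ({0..<n} - X)" using nbrs_sub[of n E v] by blast
    then show "card (nbrs n E v - X) = card (nbrs n E v \<inter> ({0..<n} - X))" by simp
  qed
  also have "\<dots> = (\<Sum>w\<in>{0..<n} - X. card (nbrs n E w \<inter> X))"
    by (rule double_count[OF sg X]) auto
  also have "\<dots> = (\<Sum>w\<in>{0..<n} - X. if w \<in> bdry n E X then 1 else 0)"
  proof (rule sum.cong[OF refl])
    fix w assume w: "w \<in> {0..<n} - X"
    show "card (nbrs n E w \<inter> X) = (if w \<in> bdry n E X then 1 else 0)"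
    proof (cases "w \<in> bdry n E X")
      case True then show ?thesis using bdry_one[OF cl] by simp
    next
      case False
      then have "nbrs n E w \<inter> X = {}" using w unfolding bdry_def by auto
      then show ?thesis using False by simp
    qed
  qed
  also have "\<dots> = card (bdry n E X)"
  proof -
    have "bdry n E X \<subseteq> {0..<n} - X" unfolding bdry_def by auto
    then have "(\<Sum>w\<in>{0..<n} - X. if w \<in> bdry n E X then 1 else 0) = (\<Sum>w\<in>bdry n E X. (1::nat))"
      by (intro sum_ind) auto
    then show ?thesis by simp
  qed
  finally show ?thesis .
qed

lemma bdry_sub: "bdry n E X \<subseteq> {0..<n} - X" unfolding bdry_def by auto

lemma gain_exists:
  assumes sg: "simple_graph n E" and reg: "regular n E d" and cl: "closedB n E X" and d1: "1 \<le> d"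
    and X: "X \<subseteq> {0..<n}" and ne: "X \<noteq> {0..<n}"
  shows "\<exists>u\<in>{0..<n} - X. real (card (bdry n E X)) * (real d - 1) \<le> real n * card (nbrs n E u \<inter> bdry n E X)"
proof -
  let ?B = "bdry n E X" and ?R = "{0..<n} - X"
  have fR: "finite ?R" by simp
  have Rne: "?R \<noteq> {}" using X ne by auto
  have "(\<Sum>u\<in>?R. card (nbrs n E u \<inter> ?B)) = (\<Sum>w\<in>?B. card (nbrs n E w \<inter> ?R))"
    by (rule double_count[OF sg]) (auto simp: bdry_def)
  also have "\<dots> = (\<Sum>w\<in>?B. d - 1)"
  proof (rule sum.cong[OF refl])
    fix w assume w: "w \<in> ?B"
    then have wn: "w < n" unfolding bdry_def by auto
    have "card (nbrs n E w \<inter> X) + card (nbrs n E w - X) = card (nbrs n E w)"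
      using card_Int_Diff[OF nbrs_fin] by metis
    moreover have "card (nbrs n E w) = d" using reg wn unfolding regular_def by simp
    moreover have "nbrs n E w - X = nbrs n E w \<inter> ?R" using nbrs_sub by blast
    ultimately show "card (nbrs n E w \<inter> ?R) = d - 1" using bdry_one[OF cl w] by simp
  qed
  finally have tot: "(\<Sum>u\<in>?R. card (nbrs n E u \<inter> ?B)) = card ?B * (d - 1)" by simp
  show ?thesis
  proof (rule ccontr)
    assume "\<not> ?thesis"
    then have lt: "\<And>u. u \<in> ?R \<Longrightarrow> real n * card (nbrs n E u \<inter> ?B) < real (card ?B) * (real d - 1)"
      using not_le by blast
    have "(\<Sum>u\<in>?R. real n * card (nbrs n E u \<inter> ?B)) < (\<Sum>u\<in>?R. real (card ?B) * (real d - 1))"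
      using sum_strict_mono[OF fR Rne lt] .
    also have "\<dots> = real (card ?R) * (real (card ?B) * (real d - 1))" by simp
    also have "\<dots> \<le> real n * (real (card ?B) * (real d - 1))"
    proof (rule mult_right_mono)
      have "card ?R \<le> card {0..<n}" by (rule card_mono) auto
      then show "real (card ?R) \<le> real n" by simp
      show "0 \<le> real (card ?B) * (real d - 1)" using d1 by simp
    qed
    finally have "real n * (\<Sum>u\<in>?R. real (card (nbrs n E u \<inter> ?B))) < real n * (real (card ?B) * (real d - 1))"
      by (simp add: sum_distrib_left)
    moreover have "(\<Sum>u\<in>?R. real (card (nbrs n E u \<inter> ?B))) = real (card ?B * (d - 1))"
      using tot by (metis of_nat_sum)
    ultimately show False using d1 by (simp add: of_nat_diff)
  qed
qed

lemma new_closure: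
  assumes sg: "simple_graph n E" and S: "S \<subseteq> {0..<n}" and u: "u \<in> {0..<n} - boot_closure n E 2 S"
  shows "card (boot_closure n E 2 S) + 1 + card (nbrs n E u \<inter> bdry n E (boot_closure n E 2 S))
     \<le> card (boot_closure n E 2 (insert u S))"
proof -
  let ?X = "boot_closure n E 2 S" and ?Y = "boot_closure n E 2 (insert u S)"
  let ?W = "nbrs n E u \<inter> bdry n E ?X"
  have sym: "\<And>x y. E x y \<Longrightarrow> E y x" and irr: "\<And>x. \<not> E x x"
    using sg unfolding simple_graph_def by blast+
  have clY: "closedB n E ?Y" by (rule bc_closed[OF sg])
  have SY: "insert u S \<subseteq> ?Y" by (rule bc_sub)
  have XY: "?X \<subseteq> ?Y" using bc_min[OF clY] SY by blast
  have uY: "u \<in> ?Y" using SY by blast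
  have WY: "?W \<subseteq> ?Y"
  proof
    fix w assume w: "w \<in> ?W"
    then obtain a where a: "a \<in> nbrs n E w \<inter> ?X" and wn: "w < n" and Euw: "E u w"
      unfolding bdry_def nbrs_def by auto
    have "E w u" using Euw sym by blast
    moreover have "E w a" "a \<in> ?X" using a unfolding nbrs_def by auto
    moreover have "a \<noteq> u" using u \<open>a \<in> ?X\<close> by auto
    ultimately show "w \<in> ?Y" using clY XY uY wn unfolding closedB_def by blast
  qed
  have S': "insert u S \<subseteq> {0..<n}" using S u by auto
  have fY: "finite ?Y" using bc_range[OF S', of E 2] finite_subset by blast
  have fX: "finite ?X" using bc_range[OF S, of E 2] finite_subset by blast
  have fW: "finite ?W" using nbrs_fin by blast
  have d1: "?X \<inter> insert u ?W = {}" using u unfolding bdry_def by auto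
  have d2: "u \<notin> ?W" using irr unfolding nbrs_def by auto
  have "card (?X \<union> insert u ?W) = card ?X + card (insert u ?W)"
    by (rule card_Un_disjoint[OF fX _ d1]) (use fW in simp)
  also have "card (insert u ?W) = card ?W + 1" using d2 fW by simp
  finally have "card (?X \<union> insert u ?W) = card ?X + 1 + card ?W" by simp
  moreover have "card (?X \<union> insert u ?W) \<le> card ?Y"
    by (rule card_mono[OF fY]) (use XY uY WY in blast)
  ultimately show ?thesis by simp
qed

lemma growth_arith:
  fixes rs rb rg rn dd eps lam :: real
  assumes ex: "(dd - lam) * rs * (rn - rs) \<le> rn * rb" and bB: "rb \<le> rn - rs" and sn: "rs < rn"
    and s0: "0 \<le> rs" and b0: "0 \<le> rb"
    and lam: "lam \<le> (1-eps)*dd" and ed: "2 \<le> eps*dd" and e0: "0<eps" and d2: "2 \<le> dd"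
    and g: "rb*(dd-1) \<le> rn*rg" and n0: "0 < rn"
  shows "eps * dd * rs \<le> rn" "eps*dd^2/(4*rn) * rs \<le> rg"
proof -
  have gap: "eps * dd \<le> dd - lam" using lam by (simp add: algebra_simps)
  have ns: "0 < rn - rs" using sn by simp
  have c1: "eps*dd*rs \<le> (dd-lam)*rs" by (rule mult_right_mono[OF gap s0])
  have c: "eps*dd*rs*(rn-rs) \<le> (dd-lam)*rs*(rn-rs)"
    by (rule mult_right_mono[OF c1]) (use ns in simp)
  have c2: "rn * rb \<le> rn*(rn-rs)" by (rule mult_left_mono[OF bB]) (use n0 in simp)
  have "eps*dd*rs*(rn-rs) \<le> rn*(rn-rs)" using c ex c2 by linarith
  then show a: "eps * dd * rs \<le> rn" using mult_le_cancel_right_pos[OF ns] by blast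
  have e2: "2 * rs \<le> eps*dd*rs" by (rule mult_right_mono[OF ed s0])
  then have half: "rn/2 \<le> rn - rs" using a by simp
  have nn: "0 \<le> eps*dd*rs" using mult_nonneg_nonneg[OF _ s0, of "eps*dd"] ed by linarith
  have "eps*dd*rs*(rn/2) \<le> eps*dd*rs*(rn-rs)" by (rule mult_left_mono[OF half nn])
  also have "\<dots> \<le> rn * rb" using c ex by linarith
  finally have h: "eps*dd*rs*(rn/2) \<le> rn * rb" .
  have "(eps*dd*rs)*rn \<le> (2*rb)*rn" using h by (simp add: algebra_simps)
  then have f: "eps*dd*rs \<le> 2 * rb" using mult_le_cancel_right_pos[OF n0] by blast
  have "eps*dd^2*rs/4 = (eps*dd*rs) * (dd/4)" by (simp add: power2_eq_square)
  also have "\<dots> \<le> (2*rb) * (dd/4)" by (rule mult_right_mono[OF f]) (use d2 in simp)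
  also have "\<dots> = rb * (dd/2)" by simp
  also have "\<dots> \<le> rb * (dd - 1)" by (rule mult_left_mono) (use b0 d2 in auto)
  also have "\<dots> \<le> rn * rg" by (rule g)
  finally have k: "eps*dd^2*rs/4 \<le> rn * rg" .
  have "eps*dd^2/(4*rn) * rs = (eps*dd^2*rs/4) / rn" by simp
  also have "\<dots> \<le> rg" using k n0 by (simp add: pos_divide_le_eq mult.commute)
  finally show "eps*dd^2/(4*rn) * rs \<le> rg" .
qed

lemma growth:
  assumes sg: "simple_graph n E" and reg: "regular n E d" and sp: "spec_ok n E lam" and n: "0 < n"
    and d2: "2 \<le> d" and ed: "2 \<le> eps * d" and e0: "0 < eps" and lam: "lam \<le> (1-eps) * d"
  shows "\<exists>S \<subseteq> {0..<n}. card S \<le> k \<and> (boot_closure n E 2 S = {0..<n} \<or>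
          ((1 + eps*d^2/(4*n))^k - 1)/(eps*d^2/(4*n)) \<le> card (boot_closure n E 2 S))"
proof (induction k)
  case 0
  show ?case by (rule exI[of _ "{}"]) simp
next
  case (Suc k)
  define \<alpha> where "\<alpha> = eps * real d^2/(4*real n)"
  have \<alpha>0: "0 < \<alpha>" unfolding \<alpha>_def using e0 d2 n by simp
  from Suc.IH obtain S where S: "S \<subseteq> {0..<n}" "card S \<le> k"
    and alt: "boot_closure n E 2 S = {0..<n} \<or> ((1+\<alpha>)^k - 1)/\<alpha> \<le> card (boot_closure n E 2 S)"
    unfolding \<alpha>_def by blast
  show ?case
  proof (cases "boot_closure n E 2 S = {0..<n}")
    case True then show ?thesis using S by (intro exI[of _ S]) auto
  next
    case False
    let ?X = "boot_closure n E 2 S"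
    let ?B = "bdry n E ?X"
    have XV: "?X \<subseteq> {0..<n}" by (rule bc_range[OF S(1)])
    have clX: "closedB n E ?X" by (rule bc_closed[OF sg])
    have hyp: "((1+\<alpha>)^k - 1)/\<alpha> \<le> card ?X" using alt False by blast
    have sn: "card ?X < n" using psubset_card_mono[of "{0..<n}" ?X] XV False by auto
    obtain u where u: "u \<in> {0..<n} - ?X"
      and gu: "real (card ?B) * (real d - 1) \<le> real n * card (nbrs n E u \<inter> ?B)"
      using gain_exists[OF sg reg clX _ XV False] d2 by auto
    have exn: "(real d - lam) * card ?X * (real n - card ?X) \<le> real n * card ?B"
      using expansion[OF sg reg sp XV n] closed_edge[OF sg clX XV] by simp
    have bB: "card ?B \<le> n - card ?X"
    proof -
      have "card ?B \<le> card ({0..<n} - ?X)" by (rule card_mono) (auto simp: bdry_def)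
      also have "\<dots> = n - card ?X" using XV by (simp add: card_Diff_subset finite_subset)
      finally show ?thesis .
    qed
    have bB': "real (card ?B) \<le> real n - real (card ?X)" using bB sn by (simp add: of_nat_diff)
    have ar: "\<alpha> * card ?X \<le> card (nbrs n E u \<inter> ?B)"
      using growth_arith(2)[OF exn bB' _ _ _ lam ed e0 _ gu] sn d2 n unfolding \<alpha>_def by simp
    have nc: "card ?X + 1 + card (nbrs n E u \<inter> ?B) \<le> card (boot_closure n E 2 (insert u S))"
      by (rule new_closure[OF sg S(1) u])
    have "((1+\<alpha>)^Suc k - 1)/\<alpha> = (1+\<alpha>) * (((1+\<alpha>)^k - 1)/\<alpha>) + 1" using \<alpha>0 by (simp add: field_simps)
    also have "\<dots> \<le> (1+\<alpha>) * card ?X + 1" using hyp \<alpha>0 by (intro add_right_mono mult_left_mono) auto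
    also have "\<dots> \<le> card (boot_closure n E 2 (insert u S))"
    proof -
      have "real (card ?X + 1 + card (nbrs n E u \<inter> ?B)) \<le> real (card (boot_closure n E 2 (insert u S)))"
        using nc by linarith
      then show ?thesis using ar by (simp add: algebra_simps)
    qed
    finally have fin: "((1+\<alpha>)^Suc k - 1)/\<alpha> \<le> card (boot_closure n E 2 (insert u S))" .
    have "insert u S \<subseteq> {0..<n}" using S u by auto
    moreover have "card (insert u S) \<le> Suc k"
      using S card_insert_le_m1 by (metis card_insert_if finite_subset finite_atLeastLessThan le_SucI Suc_le_mono)
    ultimately show ?thesis using fin unfolding \<alpha>_def by blast
  qed
qed

lemma closed_small:
  fixes eps :: real
  assumes sg: "simple_graph n E" and reg: "regular n E d" and sp: "spec_ok n E lam" and n: "0 < n"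
    and e0: "0 < eps" and lam: "lam \<le> (1-eps) * d"
    and S: "S \<subseteq> {0..<n}" and ne: "boot_closure n E 2 S \<noteq> {0..<n}"
  shows "eps * d * card (boot_closure n E 2 S) \<le> n"
proof -
  let ?X = "boot_closure n E 2 S"
  let ?B = "bdry n E ?X"
  have XV: "?X \<subseteq> {0..<n}" by (rule bc_range[OF S(1)])
  have clX: "closedB n E ?X" by (rule bc_closed[OF sg])
  have sn: "card ?X < n" using psubset_card_mono[of "{0..<n}" ?X] XV ne by auto
  have exn: "(real d - lam) * card ?X * (real n - card ?X) \<le> real n * card ?B"
    using expansion[OF sg reg sp XV n] closed_edge[OF sg clX XV] by simp
  have bB: "card ?B \<le> n - card ?X"
  proof -
    have "card ?B \<le> card ({0..<n} - ?X)" by (rule card_mono) (auto simp: bdry_def)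
    also have "\<dots> = n - card ?X" using XV by (simp add: card_Diff_subset finite_subset)
    finally show ?thesis .
  qed
  have bB': "real (card ?B) \<le> real n - real (card ?X)" using bB sn by (simp add: of_nat_diff)
  define rs where "rs = real (card ?X)"
  define rb where "rb = real (card ?B)"
  have gap: "eps * d \<le> d - lam" using lam by (simp add: algebra_simps)
  have ns: "0 < real n - rs" using sn unfolding rs_def by simp
  have s0: "0 \<le> rs" unfolding rs_def by simp
  have c1: "eps*d*rs \<le> (d-lam)*rs" by (rule mult_right_mono[OF gap s0])
  have c: "eps*d*rs*(n-rs) \<le> (d-lam)*rs*(n-rs)"
    by (rule mult_right_mono[OF c1]) (use ns in simp)
  have c2: "n * rb \<le> n*(n-rs)" by (rule mult_left_mono) (use bB' n in \<open>auto simp: rb_def rs_def\<close>)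
  have "eps*d*rs*(n-rs) \<le> n*(n-rs)" using c exn c2 unfolding rs_def rb_def by linarith
  then show ?thesis using mult_le_cancel_right_pos[OF ns] unfolding rs_def by blast
qed

lemma contagious_V: "contagious n E r {0..<n}"
  unfolding contagious_def using bc_sub[of "{0..<n}" n E r] bc_range[of "{0..<n}" n E r] by auto

lemma min_le: assumes "contagious n E r S" shows "min_contagious n E r \<le> card S"
  unfolding min_contagious_def by (rule Least_le) (use assms in blast)

lemma boot_final:
  fixes eps :: real
  assumes sg: "simple_graph n E" and reg: "regular n E d" and sp: "spec_ok n E lam" and n: "0 < n"
    and d2: "2 \<le> d" and ed: "2 \<le> eps * d" and e0: "0 < eps" and e1: "eps \<le> 1"
    and lam: "lam \<le> (1-eps) * d" and nbig: "real d^2 \<le> 2 * real n"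
  shows "real (min_contagious n E 2) \<le> 16 * real n * log 2 d / (eps * d^2)"
proof -
  define \<alpha> where "\<alpha> = eps * real d^2/(4*real n)"
  have \<alpha>0: "0 < \<alpha>" unfolding \<alpha>_def using e0 d2 n by simp
  have \<alpha>h: "\<alpha> \<le> 1/2"
  proof -
    have "eps * real d^2 \<le> 1 * real d^2" using e1 by (intro mult_right_mono) auto
    also have "\<dots> \<le> 2 * real n" using nbig by simp
    finally show ?thesis unfolding \<alpha>_def using n by (simp add: field_simps)
  qed
  define t where "t = nat \<lceil>1/\<alpha>\<rceil>"
  define j where "j = nat \<lceil>log 2 (real d)\<rceil>"
  define K where "K = t * j"
  have ld1: "1 \<le> log 2 (real d)" using d2 by simp
  have tc: "real t = of_int \<lceil>1/\<alpha>\<rceil>" unfolding t_def using \<alpha>0 by simp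
  have jc: "real j = of_int \<lceil>log 2 (real d)\<rceil>" unfolding j_def using ld1 by simp
  have t1: "1/\<alpha> \<le> real t" unfolding tc by (rule le_of_int_ceiling)
  have t2: "real t \<le> 1/\<alpha> + 1" unfolding tc by (rule of_int_ceiling_le_add_one)
  have j1: "log 2 (real d) \<le> real j" unfolding jc by (rule le_of_int_ceiling)
  have j2: "real j \<le> log 2 (real d) + 1" unfolding jc by (rule of_int_ceiling_le_add_one)
  have "2 \<le> 1 + real t * \<alpha>" using t1 \<alpha>0 by (simp add: field_simps)
  also have "\<dots> \<le> (1+\<alpha>)^t" using Bernoulli_inequality[of \<alpha> t] \<alpha>0 by simp
  finally have b2: "2 \<le> (1+\<alpha>)^t" .
  have "(2::real)^j \<le> ((1+\<alpha>)^t)^j" by (rule power_mono[OF b2]) simp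
  then have pK: "(2::real)^j \<le> (1+\<alpha>)^K" unfolding K_def by (simp add: power_mult)
  have "real d = 2 powr (log 2 (real d))" using d2 by simp
  also have "\<dots> \<le> 2 powr (real j)" using j1 by (intro powr_mono) auto
  also have "\<dots> = 2^j" by (simp add: powr_realpow)
  finally have dK: "real d \<le> (1+\<alpha>)^K" using pK by linarith
  obtain S where S: "S \<subseteq> {0..<n}" "card S \<le> K"
    and alt: "boot_closure n E 2 S = {0..<n} \<or> ((1+\<alpha>)^K - 1)/\<alpha> \<le> card (boot_closure n E 2 S)"
    using growth[OF sg reg sp n d2 ed e0 lam, of K] unfolding \<alpha>_def by blast
  have full: "boot_closure n E 2 S = {0..<n}"
  proof (rule ccontr)
    assume ne: "boot_closure n E 2 S \<noteq> {0..<n}"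
    let ?s = "real (card (boot_closure n E 2 S))"
    have sm: "eps * d * ?s \<le> n" by (rule closed_small[OF sg reg sp n e0 lam S(1) ne])
    have "(real d - 1)/\<alpha> \<le> ((1+\<alpha>)^K - 1)/\<alpha>" using dK \<alpha>0 by (intro divide_right_mono) auto
    also have "\<dots> \<le> ?s" using alt ne by blast
    finally have "(real d - 1)/\<alpha> \<le> ?s" .
    then have "eps * d * ((real d - 1)/\<alpha>) \<le> eps * d * ?s" using e0 d2 by (intro mult_left_mono) auto
    also note sm
    finally have "eps * d * ((real d - 1)/\<alpha>) \<le> n" .
    then have "eps * d * (real d - 1) * (4 * real n) \<le> real n * (eps * real d^2)"
      unfolding \<alpha>_def using e0 d2 n by (simp add: field_simps)
    then have "(eps * d * n) * (4 * (real d - 1)) \<le> (eps * d * n) * d"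
      by (simp add: power2_eq_square algebra_simps)
    then have "4 * (real d - 1) \<le> d" using e0 d2 n by (simp add: mult_le_cancel_left_pos)
    then show False using d2 by simp
  qed
  have "contagious n E 2 S" unfolding contagious_def using S full by simp
  then have mK: "min_contagious n E 2 \<le> K" using min_le S(2) by (meson le_trans)
  have "real K = real t * real j" unfolding K_def by simp
  also have "\<dots> \<le> (2/\<alpha>) * (2 * log 2 (real d))"
  proof (rule mult_mono)
    have "1 \<le> 1/\<alpha>" using \<alpha>h \<alpha>0 by (simp add: field_simps)
    then show "real t \<le> 2/\<alpha>" using t2 by simp
    show "real j \<le> 2 * log 2 (real d)" using j2 ld1 by simp
  qed (use \<alpha>0 in auto)
  also have "\<dots> = 16 * real n * log 2 d / (eps * d^2)"
    unfolding \<alpha>_def using e0 d2 n by (simp add: field_simps)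
  finally show ?thesis using mK by linarith
qed

lemma compact_box: "compact (PiE UNIV (\<lambda>i::nat. if i < n then {-1..1::real} else {0}))"
proof -
  have "compactin (product_topology (\<lambda>_. euclidean) UNIV) (PiE UNIV (\<lambda>i::nat. if i < n then {-1..1::real} else {0}))"
    by (subst compactin_PiE) (auto simp: compactin_euclidean_iff)
  then show ?thesis by (simp add: euclidean_product_topology compactin_euclidean_iff)
qed

lemma cont_sum: "continuous_on UNIV (\<lambda>x::nat\<Rightarrow>real. \<Sum>i\<in>{0..<n}. f i * x i)"
  by (intro continuous_intros; simp)

lemma cont_q: "continuous_on UNIV (\<lambda>x::nat\<Rightarrow>real. \<Sum>i\<in>{0..<n}. \<Sum>j\<in>{0..<n}. a i j * x i * x j)"
  by (intro continuous_intros; simp)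

lemma compact_K: "compact {x :: nat \<Rightarrow> real. x \<in> PiE UNIV (\<lambda>i::nat. if i < n then {-1..1::real} else {0})
   \<and> (\<Sum>i\<in>{0..<n}. x i) = 0 \<and> (\<Sum>i\<in>{0..<n}. (x i)^2) = 1}"
proof -
  have c1: "closed {x :: nat \<Rightarrow> real. (\<Sum>i\<in>{0..<n}. x i) = 0}"
    by (intro closed_Collect_eq continuous_intros; simp)
  have c2: "closed {x :: nat \<Rightarrow> real. (\<Sum>i\<in>{0..<n}. (x i)^2) = 1}"
    by (intro closed_Collect_eq continuous_intros; simp)
  have "compact (PiE UNIV (\<lambda>i::nat. if i < n then {-1..1::real} else {0}) \<inter> ({x. (\<Sum>i\<in>{0..<n}. x i) = 0} \<inter> {x. (\<Sum>i\<in>{0..<n}. (x i)^2) = 1}))"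
    by (intro compact_Int_closed compact_box closed_Int c1 c2)
  moreover have "PiE UNIV (\<lambda>i::nat. if i < n then {-1..1::real} else {0}) \<inter> ({x. (\<Sum>i\<in>{0..<n}. x i) = 0} \<inter> {x. (\<Sum>i\<in>{0..<n}. (x i)^2) = 1})
    = {x :: nat \<Rightarrow> real. x \<in> PiE UNIV (\<lambda>i::nat. if i < n then {-1..1::real} else {0})
   \<and> (\<Sum>i\<in>{0..<n}. x i) = 0 \<and> (\<Sum>i\<in>{0..<n}. (x i)^2) = 1}" by blast
  ultimately show ?thesis by simp
qed

definition Qf :: "nat \<Rightarrow> (nat \<Rightarrow> nat \<Rightarrow> real) \<Rightarrow> (nat \<Rightarrow> real) \<Rightarrow> real" where
  "Qf n a x = (\<Sum>i\<in>{0..<n}. \<Sum>j\<in>{0..<n}. a i j * x i * x j)"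
definition Bf :: "nat \<Rightarrow> (nat \<Rightarrow> nat \<Rightarrow> real) \<Rightarrow> (nat \<Rightarrow> real) \<Rightarrow> (nat \<Rightarrow> real) \<Rightarrow> real" where
  "Bf n a x y = (\<Sum>i\<in>{0..<n}. \<Sum>j\<in>{0..<n}. a i j * x i * y j)"
definition Nf :: "nat \<Rightarrow> (nat \<Rightarrow> real) \<Rightarrow> real" where
  "Nf n x = (\<Sum>i\<in>{0..<n}. (x i)^2)"
definition Pf :: "nat \<Rightarrow> (nat \<Rightarrow> real) \<Rightarrow> (nat \<Rightarrow> real) \<Rightarrow> real" where
  "Pf n x y = (\<Sum>i\<in>{0..<n}. x i * y i)"

lemma Bf_sym: assumes sym: "\<And>i j. i < n \<Longrightarrow> j < n \<Longrightarrow> a i j = a j i"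
  shows "Bf n a y x = Bf n a x y"
proof -
  have "Bf n a y x = (\<Sum>j\<in>{0..<n}. \<Sum>i\<in>{0..<n}. a i j * y i * x j)" unfolding Bf_def by (rule sum.swap)
  also have "\<dots> = Bf n a x y" unfolding Bf_def
    by (intro sum.cong refl) (auto simp: sym algebra_simps)
  finally show ?thesis .
qed

lemma Qf_exp: assumes sym: "\<And>i j. i < n \<Longrightarrow> j < n \<Longrightarrow> a i j = a j i"
  shows "Qf n a (\<lambda>i. z i + t * w i) = Qf n a z + 2 * t * Bf n a z w + t^2 * Qf n a w"
proof -
  have "Qf n a (\<lambda>i. z i + t * w i) = (\<Sum>i\<in>{0..<n}. \<Sum>j\<in>{0..<n}.
      a i j * z i * z j + t * (a i j * z i * w j) + t * (a i j * w i * z j) + t^2 * (a i j * w i * w j))"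
    unfolding Qf_def by (intro sum.cong refl) (simp add: algebra_simps power2_eq_square)
  also have "\<dots> = Qf n a z + t * Bf n a z w + t * Bf n a w z + t^2 * Qf n a w"
    unfolding Qf_def Bf_def by (simp add: sum.distrib sum_distrib_left)
  finally show ?thesis using Bf_sym[OF sym, where y=w and x=z] by simp
qed

lemma Nf_exp: "Nf n (\<lambda>i. z i + t * w i) = Nf n z + 2 * t * Pf n z w + t^2 * Nf n w"
proof -
  have "Nf n (\<lambda>i. z i + t * w i) = (\<Sum>i\<in>{0..<n}. (z i)^2 + 2 * t * (z i * w i) + t^2 * (w i)^2)"
    unfolding Nf_def by (intro sum.cong refl) (simp add: algebra_simps power2_eq_square)
  also have "\<dots> = Nf n z + 2 * t * Pf n z w + t^2 * Nf n w"
    unfolding Nf_def Pf_def by (simp add: sum.distrib sum_distrib_left)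
  finally show ?thesis .
qed

lemma quad_zero:
  fixes c e :: real
  assumes "\<And>t. 2 * t * c + t^2 * e \<le> 0" shows "c = 0"
proof -
  define k where "k = \<bar>e\<bar> + 1"
  define t where "t = c / k"
  have p: "0 < k" unfolding k_def by simp
  have "2 * t * c + t^2 * e \<le> 0" by (rule assms)
  then have "k^2 * (2 * t * c + t^2 * e) \<le> 0"
    by (simp add: mult_nonneg_nonpos)
  moreover have "k^2 * (2 * t * c + t^2 * e) = c^2 * (2 * k + e)"
    unfolding t_def using p by (simp add: field_simps power2_eq_square)
  ultimately have "c^2 * (2 * k + e) \<le> 0" by simp
  moreover have "0 < 2 * k + e" unfolding k_def by (cases "e \<ge> 0") auto
  ultimately have "c^2 \<le> 0" by (simp add: mult_le_0_iff)
  then show ?thesis by simp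
qed

lemma Nf_nonneg: "0 \<le> Nf n x" unfolding Nf_def by (simp add: sum_nonneg)

lemma Nf_zero: assumes "Nf n x = 0" "i < n" shows "x i = 0"
proof -
  have "(x i)^2 = 0" using assms sum_nonneg_eq_0_iff[of "{0..<n}" "\<lambda>i. (x i)^2"] unfolding Nf_def by simp
  then show ?thesis by simp
qed

definition Kset :: "nat \<Rightarrow> (nat \<Rightarrow> real) set" where
  "Kset n = {x :: nat \<Rightarrow> real. x \<in> PiE UNIV (\<lambda>i::nat. if i < n then {-1..1::real} else {0})
   \<and> (\<Sum>i\<in>{0..<n}. x i) = 0 \<and> (\<Sum>i\<in>{0..<n}. (x i)^2) = 1}"

lemma normalize:
  assumes S: "(\<Sum>i\<in>{0..<n}. w i) = 0" and N: "0 < Nf n w"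
  defines "y \<equiv> (\<lambda>i. if i < n then w i / sqrt (Nf n w) else 0)"
  shows "y \<in> Kset n" "Qf n a y = Qf n a w / Nf n w"
proof -
  let ?s = "sqrt (Nf n w)"
  have s0: "0 < ?s" using N by simp
  have ss: "?s^2 = Nf n w" using N by simp
  have b: "y i \<in> (if i < n then {-1..1} else {0})" for i
  proof (cases "i < n")
    case True
    have "(w i)^2 \<le> Nf n w" unfolding Nf_def using True
      by (intro member_le_sum) auto
    then have "sqrt ((w i)^2) \<le> ?s" by (rule real_sqrt_le_mono)
    then have "\<bar>w i\<bar> \<le> ?s" by (simp only: real_sqrt_abs)
    then have "- ?s \<le> w i" "w i \<le> ?s" by linarith+
    then have "-1 \<le> w i / ?s" "w i / ?s \<le> 1" using s0 by (simp_all add: divide_le_eq le_divide_eq)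
    then show ?thesis using True unfolding y_def by simp
  qed (simp add: y_def)
  have "(\<Sum>i\<in>{0..<n}. y i) = (\<Sum>i\<in>{0..<n}. w i / ?s)" unfolding y_def by (intro sum.cong) auto
  also have "\<dots> = 0" using S by (simp add: sum_divide_distrib[symmetric])
  finally have S1: "(\<Sum>i\<in>{0..<n}. y i) = 0" .
  have "(\<Sum>i\<in>{0..<n}. (y i)^2) = (\<Sum>i\<in>{0..<n}. (w i)^2 / Nf n w)"
    unfolding y_def by (intro sum.cong) (auto simp: power_divide ss)
  also have "\<dots> = (\<Sum>i\<in>{0..<n}. (w i)^2) / Nf n w" by (rule sum_divide_distrib[symmetric])
  also have "\<dots> = 1" using N unfolding Nf_def[symmetric] by simp
  finally have N1: "(\<Sum>i\<in>{0..<n}. (y i)^2) = 1" .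
  have "y \<in> PiE UNIV (\<lambda>i::nat. if i < n then {-1..1::real} else {0})"
    unfolding PiE_UNIV_domain using b by blast
  then show "y \<in> Kset n" unfolding Kset_def using S1 N1 by blast
  have "Qf n a y = (\<Sum>i\<in>{0..<n}. \<Sum>j\<in>{0..<n}. a i j * w i * w j / Nf n w)"
    unfolding Qf_def y_def
  proof (intro sum.cong refl)
    fix i j assume "i \<in> {0..<n}" "j \<in> {0..<n}"
    then show "a i j * (if i < n then w i / ?s else 0) * (if j < n then w j / ?s else 0) = a i j * w i * w j / Nf n w"
    proof -
      have ss2: "?s * ?s = Nf n w" using N by simp
      have "a i j * (w i / ?s) * (w j / ?s) = a i j * w i * w j / (?s * ?s)" by simp
      then show ?thesis using \<open>i \<in> {0..<n}\<close> \<open>j \<in> {0..<n}\<close> unfolding ss2 by simp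
    qed
  qed
  also have "\<dots> = (\<Sum>i\<in>{0..<n}. (\<Sum>j\<in>{0..<n}. a i j * w i * w j) / Nf n w)"
    by (intro sum.cong refl) (rule sum_divide_distrib[symmetric])
  also have "\<dots> = Qf n a w / Nf n w" unfolding Qf_def by (rule sum_divide_distrib[symmetric])
  finally show "Qf n a y = Qf n a w / Nf n w" .
qed

lemma Qf_zero: assumes "Nf n w = 0" shows "Qf n a w = 0"
  unfolding Qf_def using Nf_zero[OF assms] by (intro sum.neutral) auto

lemma var_main:
  fixes a :: "nat \<Rightarrow> nat \<Rightarrow> real" and dd lam :: real
  assumes sym: "\<And>i j. i<n \<Longrightarrow> j<n \<Longrightarrow> a i j = a j i"
    and rows: "\<And>i. i<n \<Longrightarrow> (\<Sum>j\<in>{0..<n}. a i j) = dd"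
    and hyp: "\<And>z \<mu>. (\<And>i. i<n \<Longrightarrow> (\<Sum>j\<in>{0..<n}. a i j * z j) = \<mu> * z i) \<Longrightarrow> (\<Sum>i\<in>{0..<n}. z i) = 0
       \<Longrightarrow> (\<exists>i<n. z i \<noteq> 0) \<Longrightarrow> \<mu> \<le> lam"
    and x: "(\<Sum>i\<in>{0..<n}. x i) = 0"
  shows "Qf n a x \<le> lam * Nf n x"
proof (cases "Kset n = {}")
  case True
  show ?thesis
  proof (cases "Nf n x = 0")
    case True then show ?thesis using Qf_zero by simp
  next
    case False
    then have "0 < Nf n x" using Nf_nonneg[of n x] by simp
    then show ?thesis using normalize(1)[OF x] \<open>Kset n = {}\<close> by blast
  qed
next
  case False
  have cK: "compact (Kset n)" unfolding Kset_def by (rule compact_K)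
  have cQU: "continuous_on UNIV (Qf n a)" unfolding Qf_def
    by (intro continuous_intros; simp)
  have cQ: "continuous_on (Kset n) (Qf n a)" by (rule continuous_on_subset[OF cQU]) simp
  obtain z where zK: "z \<in> Kset n" and zmax: "\<And>y. y \<in> Kset n \<Longrightarrow> Qf n a y \<le> Qf n a z"
    using continuous_attains_sup[OF cK False cQ] by blast
  define \<mu> where "\<mu> = Qf n a z"
  have Sz: "(\<Sum>i\<in>{0..<n}. z i) = 0" and Nz: "Nf n z = 1" using zK unfolding Kset_def Nf_def by auto
  have i: "Qf n a w \<le> \<mu> * Nf n w" if Sw: "(\<Sum>i\<in>{0..<n}. w i) = 0" for w
  proof (cases "Nf n w = 0")
    case True then show ?thesis using Qf_zero by simp
  next
    case False
    then have N: "0 < Nf n w" using Nf_nonneg[of n w] by simp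
    have "Qf n a w / Nf n w \<le> \<mu>" using normalize[OF Sw N] zmax unfolding \<mu>_def by metis
    then show ?thesis using N by (simp add: divide_le_eq mult.commute)
  qed
  have ii: "Bf n a z w = \<mu> * Pf n z w" if Sw: "(\<Sum>i\<in>{0..<n}. w i) = 0" for w
  proof -
    have "2 * t * (Bf n a z w - \<mu> * Pf n z w) + t^2 * (Qf n a w - \<mu> * Nf n w) \<le> 0" for t
    proof -
      have "(\<Sum>i\<in>{0..<n}. z i + t * w i) = 0" using Sz Sw by (simp add: sum.distrib sum_distrib_left[symmetric])
      then have "Qf n a (\<lambda>i. z i + t * w i) \<le> \<mu> * Nf n (\<lambda>i. z i + t * w i)" by (rule i)
      moreover have "Qf n a (\<lambda>i. z i + t * w i) = \<mu> + 2 * t * Bf n a z w + t^2 * Qf n a w"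
        unfolding \<mu>_def by (rule Qf_exp[OF sym])
      moreover have "Nf n (\<lambda>i. z i + t * w i) = 1 + 2 * t * Pf n z w + t^2 * Nf n w"
        using Nf_exp[of n z t w] Nz by simp
      ultimately have "\<mu> + 2 * t * Bf n a z w + t^2 * Qf n a w \<le> \<mu> * (1 + 2 * t * Pf n z w + t^2 * Nf n w)"
        by simp
      then show ?thesis by (simp add: algebra_simps)
    qed
    then have "Bf n a z w - \<mu> * Pf n z w = 0" by (rule quad_zero)
    then show ?thesis by simp
  qed
  define w where "w = (\<lambda>i. (\<Sum>j\<in>{0..<n}. a i j * z j) - \<mu> * z i)"
  have Sw: "(\<Sum>i\<in>{0..<n}. w i) = 0"
  proof -
    have "(\<Sum>i\<in>{0..<n}. \<Sum>j\<in>{0..<n}. a i j * z j) = (\<Sum>j\<in>{0..<n}. \<Sum>i\<in>{0..<n}. a i j * z j)"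
      by (rule sum.swap)
    also have "\<dots> = (\<Sum>j\<in>{0..<n}. dd * z j)"
    proof (intro sum.cong refl)
      fix j assume j: "j \<in> {0..<n}"
      have "(\<Sum>i\<in>{0..<n}. a i j * z j) = (\<Sum>i\<in>{0..<n}. a j i) * z j"
        using j by (simp add: sum_distrib_right sym)
      then show "(\<Sum>i\<in>{0..<n}. a i j * z j) = dd * z j" using rows j by simp
    qed
    also have "\<dots> = 0" using Sz by (simp add: sum_distrib_left[symmetric])
    finally show ?thesis unfolding w_def using Sz by (simp add: sum_subtractf sum_distrib_left[symmetric])
  qed
  have "Bf n a z w = (\<Sum>j\<in>{0..<n}. (w j + \<mu> * z j) * w j)"
  proof -
    have "Bf n a z w = (\<Sum>j\<in>{0..<n}. \<Sum>i\<in>{0..<n}. a i j * z i * w j)" unfolding Bf_def by (rule sum.swap)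
    also have "\<dots> = (\<Sum>j\<in>{0..<n}. (w j + \<mu> * z j) * w j)"
    proof (intro sum.cong refl)
      fix j assume j: "j \<in> {0..<n}"
      have "(\<Sum>i\<in>{0..<n}. a i j * z i * w j) = (\<Sum>i\<in>{0..<n}. a j i * z i) * w j"
        using j by (simp add: sum_distrib_right sym)
      then show "(\<Sum>i\<in>{0..<n}. a i j * z i * w j) = (w j + \<mu> * z j) * w j" unfolding w_def by simp
    qed
    finally show ?thesis .
  qed
  then have "Bf n a z w - \<mu> * Pf n z w = Nf n w"
    unfolding Pf_def Nf_def by (simp add: sum.distrib sum_subtractf sum_distrib_left algebra_simps power2_eq_square)
  then have "Nf n w = 0" using ii[OF Sw] by simp
  then have eig: "(\<Sum>j\<in>{0..<n}. a i j * z j) = \<mu> * z i" if "i < n" for i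
    using Nf_zero[of n w i] that unfolding w_def by simp
  have nz: "\<exists>i<n. z i \<noteq> 0"
  proof (rule ccontr)
    assume "\<not> ?thesis"
    then have "Nf n z = 0" unfolding Nf_def by (intro sum.neutral) auto
    then show False using Nz by simp
  qed
  have ml: "\<mu> \<le> lam" by (rule hyp[OF eig Sz nz])
  have "Qf n a x \<le> \<mu> * Nf n x" by (rule i[OF x])
  also have "\<dots> \<le> lam * Nf n x" using ml Nf_nonneg[of n x] by (rule mult_right_mono)
  finally show ?thesis .
qed

lemma eig_root:
  fixes f :: "nat \<Rightarrow> nat \<Rightarrow> real"
  assumes ev: "\<And>i. i<n \<Longrightarrow> (\<Sum>j\<in>{0..<n}. f i j * y j) = \<mu> * y i" and nz: "\<exists>i<n. y i \<noteq> 0"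
  shows "poly (char_poly (mat n n (\<lambda>(i,j). f i j))) \<mu> = 0"
proof -
  let ?M = "mat n n (\<lambda>(i,j). f i j)"
  have M: "?M \<in> carrier_mat n n" by simp
  let ?v = "vec n y"
  have "eigenvector ?M ?v \<mu>" unfolding eigenvector_def
  proof (intro conjI)
    show "?v \<in> carrier_vec (dim_row ?M)" by simp
    show "?v \<noteq> 0\<^sub>v (dim_row ?M)"
    proof
      assume "?v = 0\<^sub>v (dim_row ?M)"
      then have "\<And>i. i < n \<Longrightarrow> y i = 0" by (metis dim_row_mat(1) index_vec index_zero_vec(1))
      then show False using nz by blast
    qed
    show "?M *\<^sub>v ?v = \<mu> \<cdot>\<^sub>v ?v"
      by (rule eq_vecI) (auto simp: scalar_prod_def ev)
  qed
  then have "eigenvalue ?M \<mu>" unfolding eigenvalue_def by blast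
  then show ?thesis using eigenvalue_root_char_poly[OF M] by simp
qed

lemma adj_mat_eq: "adj_mat n E = mat n n (\<lambda>(i,j). adjc E i j)"
  unfolding adj_mat_def adjc_def by (rule eq_matI) auto

lemma adj_mat_delete:
  assumes i: "i < n"
  shows "mat_delete (adj_mat n E) i i = mat (n-1) (n-1) (\<lambda>(k,l). adjc E (insert_index i k) (insert_index i l))"
  unfolding adj_mat_eq mat_delete_def
  by (rule eq_matI) (auto simp: insert_index_def)

lemma row_sum_adj:
  assumes reg: "regular n E d" and i: "i < n"
  shows "(\<Sum>j\<in>{0..<n}. adjc E i j) = real d"
proof -
  have "(\<Sum>j\<in>{0..<n}. adjc E i j) = (\<Sum>j\<in>{0..<n}. adjc E i j * 1)" by simp
  also have "\<dots> = (\<Sum>j\<in>nbrs n E i. 1)" by (rule adj_row)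
  also have "\<dots> = real d" using reg i unfolding regular_def by simp
  finally show ?thesis .
qed

lemma mult2:
  assumes reg: "regular n E d"
    and eig: "\<And>i. i<n \<Longrightarrow> (\<Sum>j\<in>{0..<n}. adjc E i j * z j) = real d * z i"
    and Sz: "(\<Sum>i\<in>{0..<n}. z i) = 0" and nz: "\<exists>i<n. z i \<noteq> 0"
  shows "2 \<le> order (real d) (char_poly (adj_mat n E))"
proof -
  let ?M = "adj_mat n E"
  let ?p = "char_poly ?M"
  have M: "?M \<in> carrier_mat n n" unfolding adj_mat_def by simp
  have p0: "poly ?p (real d) = 0" unfolding adj_mat_eq by (rule eig_root[OF eig nz])
  have pnz: "?p \<noteq> 0" using degree_monic_char_poly[OF M] by auto
  have minor: "poly (char_poly (mat_delete ?M i i)) (real d) = 0" if i: "i < n" for i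
  proof -
    define y where "y = (\<lambda>j. z j - z i)"
    have yi: "y i = 0" unfolding y_def by simp
    have ey: "(\<Sum>j\<in>{0..<n}. adjc E k j * y j) = real d * y k" if k: "k < n" for k
    proof -
      have "(\<Sum>j\<in>{0..<n}. adjc E k j * y j) = (\<Sum>j\<in>{0..<n}. adjc E k j * z j) - z i * (\<Sum>j\<in>{0..<n}. adjc E k j)"
        unfolding y_def by (simp add: algebra_simps sum_subtractf sum_distrib_left)
      also have "\<dots> = real d * y k" using eig[OF k] row_sum_adj[OF reg k] unfolding y_def by (simp add: algebra_simps)
      finally show ?thesis .
    qed
    have ynz: "\<exists>j<n. y j \<noteq> 0"
    proof (rule ccontr)
      assume "\<not> ?thesis"
      then have zc: "\<And>j. j < n \<Longrightarrow> z j = z i" unfolding y_def by auto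
      then have "(\<Sum>j\<in>{0..<n}. z j) = real n * z i" by simp
      then have "z i = 0" using Sz i by simp
      then show False using zc nz by auto
    qed
    then obtain j where j: "j < n" "y j \<noteq> 0" by blast
    have ji: "j \<noteq> i" using j yi by auto
    obtain m where nm: "n = Suc m" using i by (cases n) auto
    let ?ins = "insert_index i"
    have img: "?ins ` {0..<m} = {0..<n} - {i}" using insert_index_image[of i m] i nm by simp
    have ev': "(\<Sum>l\<in>{0..<n-1}. adjc E (?ins k) (?ins l) * y (?ins l)) = real d * y (?ins k)"
      if k: "k < n - 1" for k
    proof -
      have kn: "?ins k < n" using k nm by (simp add: insert_index_def)
      have "(\<Sum>l\<in>{0..<n-1}. adjc E (?ins k) (?ins l) * y (?ins l)) = (\<Sum>j\<in>?ins ` {0..<m}. adjc E (?ins k) j * y j)"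
        using nm by (simp add: sum.reindex[OF insert_index_inj_on])
      also have "\<dots> = (\<Sum>j\<in>{0..<n} - {i}. adjc E (?ins k) j * y j)" using img by simp
      also have "\<dots> = (\<Sum>j\<in>{0..<n}. adjc E (?ins k) j * y j)"
        using i yi by (simp add: sum_diff1)
      also have "\<dots> = real d * y (?ins k)" by (rule ey[OF kn])
      finally show ?thesis .
    qed
    have nz': "\<exists>k<n-1. y (?ins k) \<noteq> 0"
    proof (intro exI conjI)
      show "y (?ins (delete_index i j)) \<noteq> 0" using insert_delete_index[OF ji] j by simp
      show "delete_index i j < n - 1" using j ji nm i unfolding delete_index_def by auto
    qed
    have "poly (char_poly (mat (n-1) (n-1) (\<lambda>(k,l). adjc E (?ins k) (?ins l)))) (real d) = 0"
      by (rule eig_root[OF ev' nz'])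
    then show ?thesis using adj_mat_delete[OF i] by simp
  qed
  have pd: "poly (pderiv ?p) (real d) = 0"
    unfolding pderiv_char_poly[OF M] poly_sum using minor by simp
  have dnz: "pderiv ?p \<noteq> 0"
  proof
    assume "pderiv ?p = 0"
    then obtain h where "?p = [:h:]" using pderiv_iszero by blast
    then show False using p0 pnz by simp
  qed
  have "order (real d) (pderiv ?p) \<noteq> 0" using pd dnz order_root by blast
  moreover have "order (real d) ?p = Suc (order (real d) (pderiv ?p))" by (rule order_pderiv[OF pnz p0])
  ultimately show ?thesis by simp
qed

lemma n_pos: assumes "ndl_graph n d lam E" shows "0 < n"
proof (rule ccontr)
  assume "\<not> 0 < n"
  then have n0: "n = 0" by simp
  let ?p = "char_poly (adj_mat n E)"
  have M: "adj_mat n E \<in> carrier_mat n n" unfolding adj_mat_def by simp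
  have dm: "degree ?p = n \<and> coeff ?p n = 1" by (rule degree_monic_char_poly[OF M])
  then have "[:coeff ?p 0:] = ?p" using n0 by (intro degree_0_id) simp
  then have p1: "?p = [:1:]" using dm n0 by simp
  have "real d \<in># proots ?p" using assms unfolding ndl_graph_def adj_spectrum_def by simp
  then have "poly ?p (real d) = 0" using p1 by (simp add: set_count_proots)
  then show False using p1 by simp
qed

lemma spectral: assumes ndl: "ndl_graph n d lam E" and ld: "lam < real d" shows "spec_ok n E lam"
proof -
  have sg: "simple_graph n E" and reg: "regular n E d"
    and oth: "\<forall>\<mu> \<in># adj_spectrum n E - {#real d#}. \<bar>\<mu>\<bar> \<le> lam"
    using ndl unfolding ndl_graph_def by auto
  let ?p = "char_poly (adj_mat n E)"
  have M: "adj_mat n E \<in> carrier_mat n n" unfolding adj_mat_def by simp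
  have pnz: "?p \<noteq> 0" using degree_monic_char_poly[OF M] by auto
  have sym: "adjc E i j = adjc E j i" if "i < n" "j < n" for i j
    using sg unfolding simple_graph_def adjc_def by metis
  have hyp: "\<mu> \<le> lam" if eig: "\<And>i. i<n \<Longrightarrow> (\<Sum>j\<in>{0..<n}. adjc E i j * z j) = \<mu> * z i"
    and Sz: "(\<Sum>i\<in>{0..<n}. z i) = 0" and nz: "\<exists>i<n. z i \<noteq> 0" for z \<mu>
  proof (rule ccontr)
    assume nl: "\<not> \<mu> \<le> lam"
    have root: "poly ?p \<mu> = 0" unfolding adj_mat_eq by (rule eig_root[OF eig nz])
    show False
    proof (cases "\<mu> = real d")
      case True
      have "2 \<le> order (real d) ?p" by (rule mult2[OF reg _ Sz nz]) (use eig True in auto)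
      then have "count {#real d#} (real d) < count (adj_spectrum n E) (real d)"
        unfolding adj_spectrum_def using pnz by simp
      then have "real d \<in># adj_spectrum n E - {#real d#}" by (simp add: in_diff_count)
      then have "\<bar>real d\<bar> \<le> lam" using oth by blast
      then show False using ld by simp
    next
      case False
      have "order \<mu> ?p \<noteq> 0" using root pnz order_root by blast
      then have "count {#real d#} \<mu> < count (adj_spectrum n E) \<mu>"
        unfolding adj_spectrum_def using pnz False by simp
      then have "\<mu> \<in># adj_spectrum n E - {#real d#}" by (simp add: in_diff_count)
      then have "\<bar>\<mu>\<bar> \<le> lam" using oth by blast
      then show False using nl by simp
    qed
  qed
  show ?thesis unfolding spec_ok_def
  proof (intro allI impI)
    fix x :: "nat \<Rightarrow> real" assume x: "(\<Sum>i\<in>{0..<n}. x i) = 0"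
    have "Qf n (adjc E) x \<le> lam * Nf n x"
      by (rule var_main[OF sym row_sum_adj[OF reg] hyp x]) auto
    then show "(\<Sum>i\<in>{0..<n}. \<Sum>j\<in>{0..<n}. adjc E i j * x i * x j) \<le> lam * (\<Sum>i\<in>{0..<n}. (x i)^2)"
      unfolding Qf_def Nf_def .
  qed
qed

theorem theorem6:
  "\<exists>C::real. \<forall>(\<epsilon>::real) (n::nat) (d::nat) (lam::real) (E::nat \<Rightarrow> nat \<Rightarrow> bool).
     0 < \<epsilon> \<and> \<epsilon> < 1 \<and> d \<ge> 2 \<and> ndl_graph n d lam E \<and> lam \<le> (1 - \<epsilon>) * real d \<and> C4_free E
     \<longrightarrow> real (min_contagious n E 2) \<le> C * (real n * log 2 (real d)) / (\<epsilon>^2 * (real d)^2)"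
proof (intro exI[of _ 16] allI impI)
  fix eps :: real and n d :: nat and lam :: real and E :: "nat \<Rightarrow> nat \<Rightarrow> bool"
  assume h: "0 < eps \<and> eps < 1 \<and> d \<ge> 2 \<and> ndl_graph n d lam E \<and> lam \<le> (1 - eps) * real d \<and> C4_free E"
  then have e0: "0 < eps" and e1: "eps < 1" and d2: "2 \<le> d" and ndl: "ndl_graph n d lam E"
    and lam: "lam \<le> (1 - eps) * real d" and c4: "C4_free E" by auto
  have sg: "simple_graph n E" and reg: "regular n E d" using ndl unfolding ndl_graph_def by auto
  have n: "0 < n" by (rule n_pos[OF ndl])
  have "0 < eps * real d" using e0 d2 by simp
  moreover have "(1-eps)*real d = real d - eps * real d" by (simp add: algebra_simps)
  ultimately have "lam < real d" using lam by linarith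
  then have sp: "spec_ok n E lam" by (rule spectral[OF ndl])
  have ld1: "1 \<le> log 2 (real d)" using d2 by simp
  have ed0: "0 < eps^2 * (real d)^2" using e0 d2 by simp
  have mn: "min_contagious n E 2 \<le> n" using min_le[OF contagious_V] by simp
  show "real (min_contagious n E 2) \<le> 16 * (real n * log 2 (real d)) / (eps^2 * (real d)^2)"
  proof (cases "2 \<le> eps * d")
    case False
    have sq: "eps^2 * (real d)^2 = (eps * d)^2" by (simp add: power_mult_distrib)
    have "(eps * d)^2 \<le> 2^2" using False e0 by (intro power_mono) auto
    then have "eps^2 * (real d)^2 \<le> 4" using sq by simp
    then have a1: "real n * (eps^2 * (real d)^2) \<le> real n * 4" by (intro mult_left_mono) auto
    have a2: "real n * 4 \<le> real n * (4 * log 2 (real d))" using ld1 by (intro mult_left_mono) auto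
    have "real n * (eps^2 * (real d)^2) \<le> 16 * (real n * log 2 (real d))" using a1 a2 by simp
    then have "real n \<le> 16 * (real n * log 2 (real d)) / (eps^2 * (real d)^2)"
      using ed0 by (simp add: le_divide_eq)
    then show ?thesis using mn by linarith
  next
    case True
    have c: "d * (d - 1) + 1 \<le> n" by (rule C4_count[OF sg reg c4 n])
    have nbig: "real d^2 \<le> 2 * real n"
    proof -
      have "real (d * (d - 1) + 1) \<le> real n" using c by linarith
      then have "real d * (real d - 1) + 1 \<le> real n" using d2 by (simp add: of_nat_diff)
      moreover have "(real d - 1)^2 = real d^2 - 2*real d + 1" by (simp add: power2_eq_square algebra_simps)
      moreover have "real d * (real d - 1) = real d^2 - real d" by (simp add: power2_eq_square algebra_simps)
      moreover have "0 \<le> (real d - 1)^2" by simp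
      ultimately show ?thesis by linarith
    qed
    have bf: "real (min_contagious n E 2) \<le> 16 * real n * log 2 d / (eps * d^2)"
      by (rule boot_final[OF sg reg sp n d2 True e0 _ lam nbig]) (use e1 in simp)
    have "16 * real n * log 2 d / (eps * d^2) \<le> 16 * (real n * log 2 (real d)) / (eps^2 * (real d)^2)"
    proof -
      have "eps^2 * (real d)^2 \<le> eps * (real d)^2" using e0 e1 d2 by (simp add: power2_eq_square)
      moreover have "0 < eps * (real d)^2 * (eps^2 * (real d)^2)" using e0 d2 by simp
      moreover have "0 \<le> 16 * real n * log 2 (real d)" using ld1 by simp
      ultimately have "16 * real n * log 2 (real d) / (eps * (real d)^2) \<le> 16 * real n * log 2 (real d) / (eps^2 * (real d)^2)"
        by (intro divide_left_mono) auto
      then show ?thesis by (simp add: mult.assoc)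
    qed
    then show ?thesis using bf by linarith
  qed
qed

end
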